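(* Let $\Lambda$ be a lattice and $\Lambda'\subseteq\Lambda$ a sublattice of finite index. Then $\Lambda'$ is characteristic if and only if the index of $\Lambda'$ in $\Lambda$ is coprime to $p$.
   Context: $K=\mathrm{GF}(p^r)$, $\bar K$ an algebraic closure; a lattice is a free abelian group of finite rank. A sublattice $\Lambda'\subseteq\Lambda$ is characteristic if $\Lambda'=\bigcap_{i=1}^m\ker(\theta_i)$ for some finitely many homomorphisms $\theta_1,\ldots,\theta_m:\Lambda\to\bar K^\times$. *)

theory Defs
  imports "HOL-Algebra.Algebraic_Closure_Type"
begin

text \<open>A lattice of rank n is modelled (up to isomorphism) as Z^n, realised as
  integer sequences supported on the indices 0..n-1.\<close>
definition lat :: "nat \<Rightarrow> (nat \<Rightarrow> int) set" where
  "lat n = {x. \<forall>i\<ge>n. x i = 0}"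

definition vadd :: "(nat \<Rightarrow> int) \<Rightarrow> (nat \<Rightarrow> int) \<Rightarrow> (nat \<Rightarrow> int)" where
  "vadd x y = (\<lambda>i. x i + y i)"

definition sublattice :: "nat \<Rightarrow> (nat \<Rightarrow> int) set \<Rightarrow> bool" where
  "sublattice n L \<longleftrightarrow> L \<subseteq> lat n \<and> (\<lambda>_. 0) \<in> L \<and> (\<forall>x\<in>L. \<forall>y\<in>L. vadd x y \<in> L) \<and> (\<forall>x\<in>L. (\<lambda>i. - x i) \<in> L)"

definition cosets :: "nat \<Rightarrow> (nat \<Rightarrow> int) set \<Rightarrow> (nat \<Rightarrow> int) set set" where
  "cosets n L = (\<lambda>x. vadd x ` L) ` lat n"

definition lat_index :: "nat \<Rightarrow> (nat \<Rightarrow> int) set \<Rightarrow> nat" where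
  "lat_index n L = card (cosets n L)"

definition lat_hom :: "nat \<Rightarrow> ((nat \<Rightarrow> int) \<Rightarrow> 'k::field) \<Rightarrow> bool" where
  "lat_hom n \<theta> \<longleftrightarrow> (\<forall>x\<in>lat n. \<theta> x \<noteq> 0) \<and> (\<forall>x\<in>lat n. \<forall>y\<in>lat n. \<theta> (vadd x y) = \<theta> x * \<theta> y)"

definition characteristic :: "'k::field itself \<Rightarrow> nat \<Rightarrow> (nat \<Rightarrow> int) set \<Rightarrow> bool" where
  "characteristic _ n L \<longleftrightarrow>
     (\<exists>m (\<theta>s :: nat \<Rightarrow> (nat \<Rightarrow> int) \<Rightarrow> 'k).
        (\<forall>i<m. lat_hom n (\<theta>s i)) \<and> L = {x\<in>lat n. \<forall>i<m. \<theta>s i x = 1})"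

end

theory Submission
  imports Defs "HOL-Algebra.Sylow" "HOL-Algebra.Multiplicative_Group" "HOL-Number_Theory.Residues"
begin

definition G0 :: "nat \<Rightarrow> (nat \<Rightarrow> int) monoid" where
  "G0 n = \<lparr>carrier = lat n, monoid.mult = vadd, one = (\<lambda>_. 0)\<rparr>"

definition smul :: "int \<Rightarrow> (nat \<Rightarrow> int) \<Rightarrow> (nat \<Rightarrow> int)" where
  "smul t x = (\<lambda>i. t * x i)"

lemma G0_simps [simp]: "carrier (G0 n) = lat n" "monoid.mult (G0 n) = vadd" "one (G0 n) = (\<lambda>_. 0)"
  by (simp_all add: G0_def)

lemma lat_vadd: "x \<in> lat n \<Longrightarrow> y \<in> lat n \<Longrightarrow> vadd x y \<in> lat n"
  by (simp add: lat_def vadd_def)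

lemma comm_group_G0: "comm_group (G0 n)"
proof (rule comm_groupI)
  fix x assume x: "x \<in> carrier (G0 n)"
  show "\<exists>y\<in>carrier (G0 n). y \<otimes>\<^bsub>G0 n\<^esub> x = \<one>\<^bsub>G0 n\<^esub>"
    using x by (intro bexI[of _ "\<lambda>i. - x i"]) (auto simp: lat_def vadd_def)
next
  fix x y z assume "x \<in> carrier (G0 n)" "y \<in> carrier (G0 n)" "z \<in> carrier (G0 n)"
  show "x \<otimes>\<^bsub>G0 n\<^esub> y \<otimes>\<^bsub>G0 n\<^esub> z = x \<otimes>\<^bsub>G0 n\<^esub> (y \<otimes>\<^bsub>G0 n\<^esub> z)"
    by (simp add: vadd_def add.assoc)
next
  fix x y assume "x \<in> carrier (G0 n)" "y \<in> carrier (G0 n)"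
  show "x \<otimes>\<^bsub>G0 n\<^esub> y = y \<otimes>\<^bsub>G0 n\<^esub> x"
    by (simp add: vadd_def add.commute)
next
  fix x assume "x \<in> carrier (G0 n)"
  show "\<one>\<^bsub>G0 n\<^esub> \<otimes>\<^bsub>G0 n\<^esub> x = x" by (simp add: vadd_def)
next
  fix x y assume "x \<in> carrier (G0 n)" "y \<in> carrier (G0 n)"
  thus "x \<otimes>\<^bsub>G0 n\<^esub> y \<in> carrier (G0 n)" by (simp add: lat_vadd)
qed (simp add: lat_def)

lemma group_G0: "group (G0 n)"
  using comm_group_G0 comm_group.axioms(2) by blast

lemma inv_G0: "x \<in> lat n \<Longrightarrow> inv\<^bsub>G0 n\<^esub> x = (\<lambda>i. - x i)"
  by (rule group.inv_equality[OF group_G0]) (auto simp: lat_def vadd_def)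

lemma subgroup_L: "sublattice n L \<Longrightarrow> subgroup L (G0 n)"
proof (rule subgroup.intro)
  assume A: "sublattice n L"
  show "L \<subseteq> carrier (G0 n)" using A unfolding sublattice_def by simp
  show "\<And>x y. x \<in> L \<Longrightarrow> y \<in> L \<Longrightarrow> x \<otimes>\<^bsub>G0 n\<^esub> y \<in> L"
    using A unfolding sublattice_def by simp
  show "\<one>\<^bsub>G0 n\<^esub> \<in> L" using A unfolding sublattice_def by simp
  show "\<And>x. x \<in> L \<Longrightarrow> inv\<^bsub>G0 n\<^esub> x \<in> L"
  proof -
    fix x assume "x \<in> L"
    moreover have "x \<in> lat n" using A calculation unfolding sublattice_def by blast
    ultimately show "inv\<^bsub>G0 n\<^esub> x \<in> L" using A unfolding sublattice_def by (simp add: inv_G0)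
  qed
qed

lemma pow_G0: "x \<in> lat n \<Longrightarrow> x [^]\<^bsub>G0 n\<^esub> (k::nat) = smul (int k) x"
  by (induction k) (auto simp: smul_def vadd_def algebra_simps)

lemma rcos_G0: "L \<subseteq> lat n \<Longrightarrow> L #>\<^bsub>G0 n\<^esub> x = vadd x ` L"
  unfolding r_coset_def by (force simp: vadd_def add.commute)

lemma carrier_Mod: "L \<subseteq> lat n \<Longrightarrow> carrier (G0 n Mod L) = cosets n L"
  unfolding FactGroup_def RCOSETS_def cosets_def using rcos_G0 by auto

lemma order_Mod: "L \<subseteq> lat n \<Longrightarrow> Coset.order (G0 n Mod L) = lat_index n L"
  by (simp add: Coset.order_def carrier_Mod lat_index_def)

lemma key1:
  assumes "sublattice n L" "finite (cosets n L)" "x \<in> lat n"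
  shows "smul (int (lat_index n L)) x \<in> L"
proof -
  interpret G: comm_group "G0 n" by (rule comm_group_G0)
  have sub: "subgroup L (G0 n)" using assms subgroup_L by blast
  have Lsub: "L \<subseteq> lat n" using assms(1) unfolding sublattice_def by blast
  interpret N: normal L "G0 n" using G.subgroup_imp_normal[OF sub] .
  have grp: "group (G0 n Mod L)" by (rule N.factorgroup_is_group)
  have xc: "x \<in> carrier (G0 n)" using assms(3) by simp
  have hx: "L #>\<^bsub>G0 n\<^esub> x \<in> carrier (G0 n Mod L)"
    using N.r_coset_hom_Mod xc unfolding hom_def by blast
  have "L #>\<^bsub>G0 n\<^esub> (x [^]\<^bsub>G0 n\<^esub> lat_index n L) = (L #>\<^bsub>G0 n\<^esub> x) [^]\<^bsub>G0 n Mod L\<^esub> lat_index n L"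
    by (rule hom_nat_pow[OF N.r_coset_hom_Mod xc group_G0 grp])
  also have "\<dots> = L"
    using group.pow_order_eq_1[OF grp hx] order_Mod[OF Lsub] by (simp add: FactGroup_def)
  finally have "L #>\<^bsub>G0 n\<^esub> (x [^]\<^bsub>G0 n\<^esub> lat_index n L) = L" .
  hence "x [^]\<^bsub>G0 n\<^esub> lat_index n L \<in> L"
    using G.coset_join1 sub G.nat_pow_closed[OF xc] by blast
  thus ?thesis using pow_G0[OF assms(3)] by simp
qed

lemma key2:
  assumes "sublattice n L" "finite (cosets n L)" "prime p" "p dvd lat_index n L"
  shows "\<exists>x\<in>lat n. x \<notin> L \<and> smul (int p) x \<in> L"
proof -
  interpret G: comm_group "G0 n" by (rule comm_group_G0)
  have sub: "subgroup L (G0 n)" using assms subgroup_L by blast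
  have Lsub: "L \<subseteq> lat n" using assms(1) unfolding sublattice_def by blast
  interpret N: normal L "G0 n" using G.subgroup_imp_normal[OF sub] .
  have grp: "group (G0 n Mod L)" by (rule N.factorgroup_is_group)
  interpret Q: group "G0 n Mod L" by (rule grp)
  have fin: "finite (carrier (G0 n Mod L))" using assms(2) carrier_Mod[OF Lsub] by simp
  obtain m where "Coset.order (G0 n Mod L) = p ^ 1 * m" using assms(4) order_Mod[OF Lsub] by auto
  then obtain H where H: "subgroup H (G0 n Mod L)" "card H = p"
    using sylow_thm[OF assms(3) grp _ fin] by fastforce
  have "card H > 1" using H(2) assms(3) prime_gt_1_nat by simp
  hence "H \<noteq> {\<one>\<^bsub>G0 n Mod L\<^esub>}" by auto
  moreover have "H \<noteq> {}" using \<open>card H > 1\<close> by auto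
  ultimately obtain h where h: "h \<in> H" "h \<noteq> \<one>\<^bsub>G0 n Mod L\<^esub>"
    by blast
  have hc: "h \<in> carrier (G0 n Mod L)" using H(1) h(1) subgroup.subset by blast
  then obtain x where x0: "x \<in> lat n" "h = vadd x ` L"
    unfolding carrier_Mod[OF Lsub] cosets_def by blast
  have x: "x \<in> lat n" "h = L #>\<^bsub>G0 n\<^esub> x" using x0 rcos_G0[OF Lsub] by auto
  have xc: "x \<in> carrier (G0 n)" using x(1) by simp
  have grpH: "group ((G0 n Mod L)\<lparr>carrier := H\<rparr>)" using Q.subgroup_imp_group H(1) by blast
  have "h [^]\<^bsub>(G0 n Mod L)\<lparr>carrier := H\<rparr>\<^esub> p = \<one>\<^bsub>(G0 n Mod L)\<lparr>carrier := H\<rparr>\<^esub>"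
    using group.pow_order_eq_1[OF grpH, of h] h(1) H(2) by (simp add: Coset.order_def)
  hence "h [^]\<^bsub>G0 n Mod L\<^esub> p = \<one>\<^bsub>G0 n Mod L\<^esub>"
    using Q.nat_pow_consistent[of h p H] by simp
  hence hp: "h [^]\<^bsub>G0 n Mod L\<^esub> p = L" by (simp add: FactGroup_def)
  have "L #>\<^bsub>G0 n\<^esub> (x [^]\<^bsub>G0 n\<^esub> p) = h [^]\<^bsub>G0 n Mod L\<^esub> p"
    using hom_nat_pow[OF N.r_coset_hom_Mod xc group_G0 grp] x(2) by simp
  hence "x [^]\<^bsub>G0 n\<^esub> p \<in> L"
    using hp G.coset_join1 sub G.nat_pow_closed[OF xc] by metis
  moreover have "x \<notin> L"
  proof
    assume "x \<in> L"
    hence "h = L" using x G.coset_join2 sub xc by simp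
    thus False using h(2) by (simp add: FactGroup_def)
  qed
  ultimately show ?thesis using pow_G0[OF x(1)] x(1) by auto
qed

definition hom_on :: "(nat \<Rightarrow> int) set \<Rightarrow> ((nat \<Rightarrow> int) \<Rightarrow> 'k::field) \<Rightarrow> bool" where
  "hom_on M \<theta> \<longleftrightarrow> (\<forall>x\<in>M. \<theta> x \<noteq> 0) \<and> (\<forall>x\<in>M. \<forall>y\<in>M. \<theta> (vadd x y) = \<theta> x * \<theta> y)"

definition subg :: "(nat \<Rightarrow> int) set \<Rightarrow> bool" where
  "subg M \<longleftrightarrow> (\<lambda>_. 0) \<in> M \<and> (\<forall>x\<in>M. \<forall>y\<in>M. vadd x y \<in> M) \<and> (\<forall>x\<in>M. (\<lambda>i. - x i) \<in> M)"

lemma subg_smul_nat: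
  assumes "subg M" "x \<in> M" shows "smul (int k) x \<in> M"
proof (induction k)
  case 0 then show ?case using assms by (simp add: subg_def smul_def)
next
  case (Suc k)
  have "smul (int (Suc k)) x = vadd x (smul (int k) x)"
    by (auto simp: smul_def vadd_def algebra_simps)
  then show ?case using Suc assms by (simp add: subg_def)
qed

lemma subg_smul:
  assumes "subg M" "x \<in> M" shows "smul t x \<in> M"
proof (cases "t \<ge> 0")
  case True
  then obtain k where "t = int k" by (metis nonneg_eq_int)
  then show ?thesis using subg_smul_nat assms by blast
next
  case False
  define k where "k = nat (- t)"
  have k: "t = - int k" using False by (simp add: k_def)
  have "smul t x = (\<lambda>i. - smul (int k) x i)" by (auto simp: smul_def k)
  then show ?thesis using subg_smul_nat[OF assms, of k] assms(1) by (simp add: subg_def)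
qed

lemma hom_zero:
  assumes "subg M" "hom_on M \<theta>" shows "\<theta> (\<lambda>_. 0) = 1"
proof -
  have z: "(\<lambda>_. 0) \<in> M" using assms by (simp add: subg_def)
  have "\<theta> (\<lambda>_. 0) = \<theta> (vadd (\<lambda>_. 0) (\<lambda>_. 0))" by (simp add: vadd_def)
  also have "\<dots> = \<theta> (\<lambda>_. 0) * \<theta> (\<lambda>_. 0)" using assms z by (simp add: hom_on_def)
  finally show ?thesis using assms z unfolding hom_on_def
    by (metis mult_cancel_left1)
qed

lemma hom_smul_nat:
  assumes "subg M" "hom_on M \<theta>" "x \<in> M" shows "\<theta> (smul (int k) x) = \<theta> x ^ k"
proof (induction k)
  case 0
  have "smul (int 0) x = (\<lambda>_. 0)" by (simp add: smul_def)
  then show ?case using hom_zero[OF assms(1,2)] by simp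
next
  case (Suc k)
  have "smul (int (Suc k)) x = vadd x (smul (int k) x)"
    by (auto simp: smul_def vadd_def algebra_simps)
  then show ?case using Suc assms subg_smul_nat[OF assms(1,3), of k] by (simp add: hom_on_def)
qed

lemma hom_smul:
  assumes "subg M" "hom_on M \<theta>" "x \<in> M" shows "\<theta> (smul t x) = \<theta> x powi t"
proof (cases "t \<ge> 0")
  case True
  then obtain k where "t = int k" by (metis nonneg_eq_int)
  then show ?thesis using hom_smul_nat[OF assms] by simp
next
  case False
  define k where "k = nat (- t)"
  have k: "t = - int k" using False by (simp add: k_def)
  have nz: "\<theta> x \<noteq> 0" using assms by (simp add: hom_on_def)
  have "vadd (smul t x) (smul (int k) x) = (\<lambda>_. 0)" by (auto simp: smul_def vadd_def k)
  hence "\<theta> (smul t x) * \<theta> (smul (int k) x) = 1"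
    using assms(2) subg_smul[OF assms(1,3)] hom_zero[OF assms(1,2)] unfolding hom_on_def by metis
  hence "\<theta> (smul t x) * \<theta> x ^ k = 1" using hom_smul_nat[OF assms] by simp
  hence "\<theta> x ^ k * \<theta> (smul t x) = 1" by (simp add: mult.commute)
  hence "inverse (\<theta> x ^ k) = \<theta> (smul t x)" by (rule inverse_unique)
  hence "\<theta> (smul t x) = inverse (\<theta> x ^ k)" by simp
  then show ?thesis using k by (simp add: power_int_minus)
qed

lemma ideal_lemma:
  assumes "subg M" "k > 0" "smul (int k) v \<in> M" "\<forall>j. 0 < j \<and> j < k \<longrightarrow> smul (int j) v \<notin> M"
  shows "smul t v \<in> M \<longleftrightarrow> int k dvd t"
proof
  assume "int k dvd t"
  then obtain q where "t = int k * q" by blast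
  hence "smul t v = smul q (smul (int k) v)" by (auto simp: smul_def)
  thus "smul t v \<in> M" using subg_smul[OF assms(1,3)] by simp
next
  assume t: "smul t v \<in> M"
  define r where "r = t mod int k"
  have r: "0 \<le> r" "r < int k" using assms(2) by (auto simp: r_def)
  have req: "r = t - int k * (t div int k)" by (simp add: r_def minus_mult_div_eq_mod)
  have "smul r v = vadd (smul t v) (smul (- (t div int k)) (smul (int k) v))"
    unfolding smul_def vadd_def req by (simp add: algebra_simps)
  hence "smul r v \<in> M" using t subg_smul[OF assms(1,3)] assms(1) unfolding subg_def by metis
  moreover have "smul r v = smul (int (nat r)) v" using r by simp
  ultimately have "nat r = 0" using assms(4) r by (metis nat_less_iff neq0_conv)
  hence "r = 0" using r by simp
  thus "int k dvd t" by (simp add: r_def dvd_eq_mod_eq_0)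
qed

definition ext_set :: "(nat \<Rightarrow> int) set \<Rightarrow> (nat \<Rightarrow> int) \<Rightarrow> (nat \<Rightarrow> int) set" where
  "ext_set M v = {y. \<exists>m\<in>M. \<exists>t. y = vadd m (smul t v)}"

lemma subg_ext_set:
  assumes "subg M" shows "subg (ext_set M v)"
  unfolding subg_def
proof (intro conjI ballI)
  show "(\<lambda>_. 0) \<in> ext_set M v" unfolding ext_set_def
    using assms unfolding subg_def by (intro CollectI bexI[of _ "\<lambda>_. 0"] exI[of _ 0]) (auto simp: vadd_def smul_def)
next
  fix x y assume "x \<in> ext_set M v" "y \<in> ext_set M v"
  then obtain m1 t1 m2 t2 where a: "m1 \<in> M" "x = vadd m1 (smul t1 v)" "m2 \<in> M" "y = vadd m2 (smul t2 v)"
    unfolding ext_set_def by blast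
  have "vadd x y = vadd (vadd m1 m2) (smul (t1 + t2) v)"
    unfolding a vadd_def smul_def by (simp add: algebra_simps)
  moreover have "vadd m1 m2 \<in> M" using a assms unfolding subg_def by blast
  ultimately show "vadd x y \<in> ext_set M v" unfolding ext_set_def by blast
next
  fix x assume "x \<in> ext_set M v"
  then obtain m1 t1 where a: "m1 \<in> M" "x = vadd m1 (smul t1 v)"
    unfolding ext_set_def by blast
  have "(\<lambda>i. - x i) = vadd (\<lambda>i. - m1 i) (smul (- t1) v)"
    unfolding a vadd_def smul_def by (simp add: algebra_simps)
  moreover have "(\<lambda>i. - m1 i) \<in> M" using a assms unfolding subg_def by blast
  ultimately show "(\<lambda>i. - x i) \<in> ext_set M v" unfolding ext_set_def by blast
qed

lemma ext_set_sub: "M \<subseteq> ext_set M v"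
proof
  fix m assume "m \<in> M"
  moreover have "m = vadd m (smul 0 v)" by (simp add: vadd_def smul_def)
  ultimately show "m \<in> ext_set M v" unfolding ext_set_def by blast
qed

lemma ext_hom:
  fixes \<theta> :: "(nat \<Rightarrow> int) \<Rightarrow> 'k::field"
  assumes M: "subg M" and h: "hom_on M \<theta>" and c: "c \<noteq> 0"
    and cond: "\<forall>t. smul t v \<in> M \<longrightarrow> \<theta> (smul t v) = c powi t"
  shows "\<exists>\<theta>'. hom_on (ext_set M v) \<theta>' \<and> (\<forall>m\<in>M. \<theta>' m = \<theta> m) \<and> \<theta>' v = c"
proof -
  have WD: "\<theta> m * c powi t = \<theta> m' * c powi t'"
    if "m \<in> M" "m' \<in> M" "vadd m (smul t v) = vadd m' (smul t' v)" for m m' t t'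
  proof -
    have pt: "m i + t * v i = m' i + t' * v i" for i
      using fun_cong[OF that(3), of i] by (simp add: vadd_def smul_def)
    have e1: "smul (t' - t) v = vadd m (\<lambda>i. - m' i)"
    proof (rule ext)
      fix i show "smul (t' - t) v i = vadd m (\<lambda>i. - m' i) i"
        using pt[of i] by (simp add: vadd_def smul_def algebra_simps)
    qed
    have "(\<lambda>i. - m' i) \<in> M" using that M unfolding subg_def by blast
    hence s: "smul (t' - t) v \<in> M" using e1 that M unfolding subg_def by simp
    have e2: "m = vadd m' (smul (t' - t) v)"
    proof (rule ext)
      fix i show "m i = vadd m' (smul (t' - t) v) i"
        using pt[of i] by (simp add: vadd_def smul_def algebra_simps)
    qed
    have "\<theta> m = \<theta> (vadd m' (smul (t' - t) v))" using e2 by simp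
    also have "\<dots> = \<theta> m' * \<theta> (smul (t' - t) v)" using h s that(2) unfolding hom_on_def by blast
    also have "\<dots> = \<theta> m' * c powi (t' - t)" using cond s by simp
    finally have "\<theta> m = \<theta> m' * c powi (t' - t)" .
    hence "\<theta> m * c powi t = \<theta> m' * (c powi (t' - t) * c powi t)" by simp
    also have "c powi (t' - t) * c powi t = c powi t'"
      using c by (simp add: power_int_add[symmetric])
    finally show ?thesis .
  qed
  define \<theta>' where "\<theta>' y = (SOME z. \<exists>m\<in>M. \<exists>t. y = vadd m (smul t v) \<and> z = \<theta> m * c powi t)" for y
  have val: "\<theta>' (vadd m (smul t v)) = \<theta> m * c powi t" if "m \<in> M" for m t
  proof -
    have ex: "\<exists>z. \<exists>m'\<in>M. \<exists>t'. vadd m (smul t v) = vadd m' (smul t' v) \<and> z = \<theta> m' * c powi t'"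
      using that by blast
    obtain m' t' where m': "m' \<in> M" "vadd m (smul t v) = vadd m' (smul t' v)"
        "\<theta>' (vadd m (smul t v)) = \<theta> m' * c powi t'"
      using someI_ex[OF ex] unfolding \<theta>'_def by blast
    thus ?thesis using WD[OF that m'(1) m'(2)] m'(3) by simp
  qed
  have hom: "hom_on (ext_set M v) \<theta>'"
    unfolding hom_on_def
  proof (intro conjI ballI)
    fix x assume "x \<in> ext_set M v"
    then obtain m1 t1 where a: "m1 \<in> M" "x = vadd m1 (smul t1 v)"
      unfolding ext_set_def by blast
    show "\<theta>' x \<noteq> 0" using val[OF a(1)] a h c unfolding hom_on_def by simp
  next
    fix x y assume "x \<in> ext_set M v" "y \<in> ext_set M v"
    then obtain m1 t1 m2 t2 where a: "m1 \<in> M" "x = vadd m1 (smul t1 v)" "m2 \<in> M" "y = vadd m2 (smul t2 v)"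
      unfolding ext_set_def by blast
    have e: "vadd x y = vadd (vadd m1 m2) (smul (t1 + t2) v)"
      unfolding a vadd_def smul_def by (simp add: algebra_simps)
    have m12: "vadd m1 m2 \<in> M" using a M unfolding subg_def by blast
    have "\<theta>' (vadd x y) = \<theta> (vadd m1 m2) * c powi (t1 + t2)" unfolding e using val[OF m12] .
    also have "\<dots> = (\<theta> m1 * c powi t1) * (\<theta> m2 * c powi t2)"
      using h a(1,3) c unfolding hom_on_def by (simp add: power_int_add)
    also have "\<dots> = \<theta>' x * \<theta>' y" using val a by simp
    finally show "\<theta>' (vadd x y) = \<theta>' x * \<theta>' y" .
  qed
  have agree: "\<forall>m\<in>M. \<theta>' m = \<theta> m"
  proof
    fix m assume m: "m \<in> M"
    have "m = vadd m (smul 0 v)" by (simp add: vadd_def smul_def)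
    hence "\<theta>' m = \<theta> m * c powi 0" using val[OF m, of 0] by simp
    thus "\<theta>' m = \<theta> m" by simp
  qed
  have "v = vadd (\<lambda>_. 0) (smul 1 v)" by (simp add: vadd_def smul_def)
  moreover have "(\<lambda>_. 0) \<in> M" using M unfolding subg_def by blast
  ultimately have "\<theta>' v = \<theta> (\<lambda>_. 0) * c powi 1" using val by metis
  hence "\<theta>' v = c" using hom_zero[OF M h] by simp
  thus ?thesis using hom agree by blast
qed

lemma ext_exists_c:
  fixes \<theta> :: "(nat \<Rightarrow> int) \<Rightarrow> 'k::alg_closed_field"
  assumes M: "subg M" and h: "hom_on M \<theta>"
  shows "\<exists>c. c \<noteq> 0 \<and> (\<forall>t. smul t v \<in> M \<longrightarrow> \<theta> (smul t v) = c powi t)"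
proof (cases "\<exists>k::nat. k > 0 \<and> smul (int k) v \<in> M")
  case False
  have tz: "t = 0" if "smul t v \<in> M" for t
  proof (rule ccontr)
    assume t: "t \<noteq> 0"
    have neg: "smul (- t) v \<in> M"
    proof -
      have "smul (- t) v = (\<lambda>i. - smul t v i)" by (simp add: smul_def)
      thus ?thesis using that M unfolding subg_def by simp
    qed
    have "\<exists>j::nat. j > 0 \<and> smul (int j) v \<in> M"
    proof (cases "t > 0")
      case True
      hence "int (nat t) = t" by simp
      thus ?thesis using that True by (intro exI[of _ "nat t"]) simp
    next
      case False
      hence "int (nat (- t)) = - t" by simp
      thus ?thesis using neg False t by (intro exI[of _ "nat (- t)"]) simp
    qed
    thus False using False by blast
  qed
  have z1: "\<theta> (smul 0 v) = 1"
  proof -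
    have "smul 0 v = (\<lambda>_. 0)" by (simp add: smul_def)
    thus ?thesis using hom_zero[OF M h] by simp
  qed
  have "\<forall>t. smul t v \<in> M \<longrightarrow> \<theta> (smul t v) = 1 powi t"
  proof (intro allI impI)
    fix t assume "smul t v \<in> M"
    hence "t = 0" by (rule tz)
    thus "\<theta> (smul t v) = 1 powi t" using z1 by simp
  qed
  thus ?thesis by (intro exI[of _ 1]) simp
next
  case True
  define P where "P = (\<lambda>k::nat. k > 0 \<and> smul (int k) v \<in> M)"
  define k where "k = Least P"
  have Pk: "P k" unfolding k_def
  proof (rule LeastI_ex)
    show "\<exists>x. P x" using True unfolding P_def .
  qed
  hence k: "k > 0" "smul (int k) v \<in> M" unfolding P_def by simp_all
  have kmin: "\<forall>j. 0 < j \<and> j < k \<longrightarrow> smul (int j) v \<notin> M"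
  proof (intro allI impI)
    fix j assume j: "0 < j \<and> j < k"
    have "\<not> P j" by (rule not_less_Least) (use j in \<open>simp add: k_def\<close>)
    thus "smul (int j) v \<notin> M" using j unfolding P_def by simp
  qed
  have a: "\<theta> (smul (int k) v) \<noteq> 0" using h k(2) unfolding hom_on_def by blast
  obtain c where c: "c ^ k = \<theta> (smul (int k) v)" using nth_root_exists[OF k(1)] by blast
  have c0: "c \<noteq> 0"
  proof
    assume "c = 0"
    hence "c ^ k = 0" using k(1) by simp
    thus False using c a by simp
  qed
  have "\<theta> (smul t v) = c powi t" if "smul t v \<in> M" for t
  proof -
    have "int k dvd t" using ideal_lemma[OF M k(1) k(2) kmin, of t] that by simp
    then obtain q where q: "t = int k * q" by (elim dvdE)
    have "smul t v = smul q (smul (int k) v)" unfolding q smul_def by (simp add: mult.assoc mult.left_commute)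
    hence "\<theta> (smul t v) = \<theta> (smul (int k) v) powi q" using hom_smul[OF M h k(2)] by simp
    also have "\<dots> = (c powi int k) powi q" using c by (simp only: power_int_of_nat)
    also have "\<dots> = c powi t" unfolding q by (rule power_int_mult[symmetric])
    finally show ?thesis .
  qed
  thus ?thesis using c0 by blast
qed

lemma full_ext:
  fixes \<theta>0 :: "(nat \<Rightarrow> int) \<Rightarrow> 'k::alg_closed_field"
  assumes M0: "subg M0" "M0 \<subseteq> lat n" and h0: "hom_on M0 \<theta>0"
  shows "\<exists>\<theta>. hom_on (lat n) \<theta> \<and> (\<forall>m\<in>M0. \<theta> m = \<theta>0 m)"
proof -
  define Mj where "Mj j = {y. \<exists>m\<in>M0. \<forall>i\<ge>j. y i = m i}" for j :: nat
  define e where "e j = (\<lambda>i::nat. if i = j then (1::int) else 0)" for j :: nat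
  have z0: "(\<lambda>_. 0) \<in> M0" using M0(1) unfolding subg_def by blast
  have memI: "y \<in> Mj j" if "m \<in> M0" "\<forall>i\<ge>j. y i = m i" for m y j
    unfolding Mj_def using that by blast
  have subgMj: "subg (Mj j)" for j
    unfolding subg_def
  proof (intro conjI ballI)
    show "(\<lambda>_. 0) \<in> Mj j" unfolding Mj_def by (intro CollectI bexI[OF _ z0]) simp
  next
    fix x y assume "x \<in> Mj j" "y \<in> Mj j"
    then obtain m1 m2 where a: "m1 \<in> M0" "\<forall>i\<ge>j. x i = m1 i" "m2 \<in> M0" "\<forall>i\<ge>j. y i = m2 i"
      unfolding Mj_def by blast
    have "vadd m1 m2 \<in> M0" using a M0(1) unfolding subg_def by blast
    thus "vadd x y \<in> Mj j" by (rule memI) (use a in \<open>simp add: vadd_def\<close>)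
  next
    fix x assume "x \<in> Mj j"
    then obtain m1 where a: "m1 \<in> M0" "\<forall>i\<ge>j. x i = m1 i"
      unfolding Mj_def by blast
    have "(\<lambda>i. - m1 i) \<in> M0" using a M0(1) unfolding subg_def by blast
    thus "(\<lambda>i. - x i) \<in> Mj j" by (rule memI) (use a in simp)
  qed
  have M0sub: "M0 \<subseteq> Mj j" for j
  proof
    fix m assume "m \<in> M0"
    thus "m \<in> Mj j" by (rule memI) simp
  qed
  have Mj0: "Mj 0 = M0"
  proof
    show "Mj 0 \<subseteq> M0"
    proof
      fix y assume "y \<in> Mj 0"
      then obtain m where "m \<in> M0" "\<forall>i\<ge>0. y i = m i" unfolding Mj_def by blast
      moreover have "y = m" using calculation(2) by (intro ext) simp
      ultimately show "y \<in> M0" by simp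
    qed
  qed (rule M0sub)
  have Mjn: "Mj n = lat n"
  proof
    show "Mj n \<subseteq> lat n"
    proof
      fix y assume "y \<in> Mj n"
      then obtain m where "m \<in> M0" "\<forall>i\<ge>n. y i = m i" unfolding Mj_def by blast
      moreover have "m \<in> lat n" using calculation(1) M0(2) by blast
      ultimately show "y \<in> lat n" unfolding lat_def by simp
    qed
  next
    show "lat n \<subseteq> Mj n"
    proof
      fix y assume "y \<in> lat n"
      hence "\<forall>i\<ge>n. y i = (\<lambda>_. 0) i" unfolding lat_def by simp
      thus "y \<in> Mj n" by (intro memI[OF z0])
    qed
  qed
  have step: "Mj (Suc j) = ext_set (Mj j) (e j)" for j
  proof
    show "Mj (Suc j) \<subseteq> ext_set (Mj j) (e j)"
    proof
      fix y assume "y \<in> Mj (Suc j)"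
      then obtain m where m: "m \<in> M0" "\<forall>i\<ge>Suc j. y i = m i" unfolding Mj_def by blast
      define y' where "y' = vadd y (smul (m j - y j) (e j))"
      have "\<forall>i\<ge>j. y' i = m i"
      proof (intro allI impI)
        fix i assume "j \<le> i"
        thus "y' i = m i" using m(2)[rule_format, of i]
          by (cases "i = j") (auto simp: y'_def vadd_def smul_def e_def)
      qed
      hence "y' \<in> Mj j" by (intro memI[OF m(1)])
      moreover have "y = vadd y' (smul (y j - m j) (e j))"
        by (intro ext) (simp add: y'_def vadd_def smul_def e_def)
      ultimately show "y \<in> ext_set (Mj j) (e j)" unfolding ext_set_def by blast
    qed
  next
    show "ext_set (Mj j) (e j) \<subseteq> Mj (Suc j)"
    proof
      fix y assume "y \<in> ext_set (Mj j) (e j)"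
      then obtain m' t where a: "m' \<in> Mj j" "y = vadd m' (smul t (e j))" unfolding ext_set_def by blast
      then obtain m where m: "m \<in> M0" "\<forall>i\<ge>j. m' i = m i" unfolding Mj_def by blast
      have "\<forall>i\<ge>Suc j. y i = m i" using m(2) a(2) by (simp add: vadd_def smul_def e_def)
      thus "y \<in> Mj (Suc j)" by (intro memI[OF m(1)])
    qed
  qed
  have "\<exists>\<theta>. hom_on (Mj j) \<theta> \<and> (\<forall>m\<in>M0. \<theta> m = \<theta>0 m)" for j
  proof (induction j)
    case 0
    show ?case using h0 Mj0 by (intro exI[of _ \<theta>0]) simp
  next
    case (Suc j)
    then obtain \<theta> where th: "hom_on (Mj j) \<theta>" "\<forall>m\<in>M0. \<theta> m = \<theta>0 m" by blast
    obtain c where c: "c \<noteq> 0" "\<forall>t. smul t (e j) \<in> Mj j \<longrightarrow> \<theta> (smul t (e j)) = c powi t"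
      using ext_exists_c[OF subgMj th(1)] by blast
    obtain \<theta>' where th': "hom_on (ext_set (Mj j) (e j)) \<theta>'" "\<forall>m\<in>Mj j. \<theta>' m = \<theta> m"
      using ext_hom[OF subgMj th(1) c(1) c(2)] by blast
    have "\<forall>m\<in>M0. \<theta>' m = \<theta>0 m"
    proof
      fix m assume m: "m \<in> M0"
      hence "m \<in> Mj j" using M0sub[of j] by blast
      hence "\<theta>' m = \<theta> m" using th'(2) by blast
      also have "\<dots> = \<theta>0 m" using th(2) m by blast
      finally show "\<theta>' m = \<theta>0 m" .
    qed
    thus ?case using th'(1) step by (intro exI[of _ \<theta>']) simp
  qed
  thus ?thesis using Mjn by metis
qed

lemma root_unity:
  assumes "k > 1" "of_nat k \<noteq> (0::'k::alg_closed_field)"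
  shows "\<exists>c::'k. c ^ k = 1 \<and> c \<noteq> 1"
proof -
  have "k - 1 > 0" using assms(1) by simp
  hence "\<exists>x::'k. (\<Sum>j\<le>k - 1. (\<lambda>_. 1) j * x ^ j) = 0"
    by (intro alg_closed) simp_all
  then obtain c :: 'k where c: "(\<Sum>j\<le>k - 1. 1 * c ^ j) = 0" by auto
  have kk: "{..k - 1} = {..<k}" using assms(1) by auto
  have s: "(\<Sum>j<k. c ^ j) = 0" using c kk by simp
  have "c ^ k - 1 = (c - 1) * (\<Sum>j<k. c ^ j)" by (rule power_diff_1_eq)
  hence "c ^ k = 1" using s by simp
  moreover have "c \<noteq> 1"
  proof
    assume "c = 1"
    hence "(\<Sum>j<k. c ^ j) = of_nat k" by simp
    thus False using s assms(2) by simp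
  qed
  ultimately show ?thesis by blast
qed

lemma frob_one:
  fixes a :: "'k::field"
  assumes p: "CHAR('k) = p" "prime p" and a: "a ^ p = 1"
  shows "a = 1"
proof -
  have p0: "p > 0" using p(2) prime_gt_0_nat by blast
  define g where "g k = of_nat (p choose k) * a ^ k * (-1 :: 'k) ^ (p - k)" for k
  have "(a + (-1)) ^ p = (\<Sum>k\<le>p. g k)" unfolding g_def by (rule binomial_ring)
  also have "\<dots> = (\<Sum>k\<in>{0, p}. g k)"
  proof (rule sum.mono_neutral_right)
    show "\<forall>i\<in>{..p} - {0, p}. g i = 0"
    proof
      fix i assume i: "i \<in> {..p} - {0, p}"
      hence "p dvd (p choose i)" using dvd_choose_prime[of i p] p(2) by auto
      hence "of_nat (p choose i) = (0::'k)" using p(1) by (simp add: of_nat_eq_0_iff_char_dvd)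
      thus "g i = 0" by (simp add: g_def)
    qed
  qed auto
  also have "\<dots> = g 0 + g p" using p0 by simp
  also have "\<dots> = (-1) ^ p + a ^ p" by (simp add: g_def)
  also have "(-1 :: 'k) ^ p = - (1 ^ p)" using minus_power_prime_CHAR[where 'a='k, of p 1] p by simp
  finally have "(a - 1) ^ p = 0" using a by simp
  thus ?thesis by simp
qed

lemma sep:
  assumes L: "sublattice n L" "finite (cosets n L)"
    and nd: "\<not> CHAR('k::alg_closed_field) dvd lat_index n L"
    and x: "x \<in> lat n" "x \<notin> L"
  shows "\<exists>\<theta>::(nat\<Rightarrow>int)\<Rightarrow>'k. hom_on (lat n) \<theta> \<and> (\<forall>y\<in>L. \<theta> y = 1) \<and> \<theta> x \<noteq> 1"
proof -
  have subgL: "subg L" using L(1) unfolding sublattice_def subg_def by blast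
  have Lsub: "L \<subseteq> lat n" using L(1) unfolding sublattice_def by blast
  define N where "N = lat_index n L"
  have "vadd (\<lambda>_. 0) ` L \<in> cosets n L" unfolding cosets_def lat_def by blast
  hence "cosets n L \<noteq> {}" by blast
  hence N0: "N > 0" unfolding N_def lat_index_def using L(2) by (simp add: card_gt_0_iff)
  have xN: "smul (int N) x \<in> L" using key1[OF L x(1)] N_def by simp
  define P where "P = (\<lambda>k::nat. k > 0 \<and> smul (int k) x \<in> L)"
  define k where "k = Least P"
  have Pk: "P k" unfolding k_def
  proof (rule LeastI_ex)
    show "\<exists>x. P x" unfolding P_def using N0 xN by blast
  qed
  hence k: "k > 0" "smul (int k) x \<in> L" unfolding P_def by simp_all
  have kmin: "\<forall>j. 0 < j \<and> j < k \<longrightarrow> smul (int j) x \<notin> L"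
  proof (intro allI impI)
    fix j assume j: "0 < j \<and> j < k"
    have "\<not> P j" by (rule not_less_Least) (use j in \<open>simp add: k_def\<close>)
    thus "smul (int j) x \<notin> L" using j unfolding P_def by simp
  qed
  have ideal: "smul t x \<in> L \<longleftrightarrow> int k dvd t" for t by (rule ideal_lemma[OF subgL k(1) k(2) kmin])
  have "int k dvd int N" using ideal[of "int N"] xN by simp
  hence kN: "k dvd N" by simp
  have "smul (int 1) x = x" by (simp add: smul_def)
  hence "k \<noteq> 1" using k(2) x(2) by auto
  hence k1: "k > 1" using k(1) by simp
  have "\<not> CHAR('k) dvd k" using kN nd N_def dvd_trans by blast
  hence "of_nat k \<noteq> (0::'k)" by (simp add: of_nat_eq_0_iff_char_dvd)
  then obtain c :: 'k where c: "c ^ k = 1" "c \<noteq> 1" using root_unity[OF k1] by blast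
  have c0: "c \<noteq> 0"
  proof
    assume "c = 0"
    hence "c ^ k = 0" using k(1) by simp
    thus False using c(1) by simp
  qed
  have h1: "hom_on L (\<lambda>_. 1::'k)" unfolding hom_on_def by simp
  have cond: "\<forall>t. smul t x \<in> L \<longrightarrow> (\<lambda>_. 1::'k) (smul t x) = c powi t"
  proof (intro allI impI)
    fix t assume "smul t x \<in> L"
    hence "int k dvd t" using ideal by blast
    then obtain q where q: "t = int k * q" by (elim dvdE)
    have "c powi t = (c powi int k) powi q" unfolding q by (rule power_int_mult)
    also have "\<dots> = 1" using c(1) by (simp only: power_int_of_nat power_int_1_left)
    finally show "(\<lambda>_. 1::'k) (smul t x) = c powi t" by simp
  qed
  obtain \<theta>' where th': "hom_on (ext_set L x) \<theta>'" "\<forall>m\<in>L. \<theta>' m = 1" "\<theta>' x = c"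
    using ext_hom[OF subgL h1 c0 cond] by blast
  have sE: "subg (ext_set L x)" by (rule subg_ext_set[OF subgL])
  have ElE: "ext_set L x \<subseteq> lat n"
  proof
    fix y assume "y \<in> ext_set L x"
    then obtain m t where a: "m \<in> L" "y = vadd m (smul t x)" unfolding ext_set_def by blast
    have "m \<in> lat n" using a(1) Lsub by blast
    thus "y \<in> lat n" using a(2) x(1) unfolding lat_def vadd_def smul_def by simp
  qed
  obtain \<theta> :: "(nat\<Rightarrow>int)\<Rightarrow>'k" where th: "hom_on (lat n) \<theta>" "\<forall>m\<in>ext_set L x. \<theta> m = \<theta>' m"
    using full_ext[OF sE ElE th'(1)] by blast
  have "\<forall>y\<in>L. \<theta> y = 1"
  proof
    fix y assume y: "y \<in> L"
    hence "y \<in> ext_set L x" using ext_set_sub by blast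
    thus "\<theta> y = 1" using th(2) th'(2) y by simp
  qed
  moreover have "\<theta> x = c"
  proof -
    have "x = vadd (\<lambda>_. 0) (smul 1 x)" by (simp add: vadd_def smul_def)
    moreover have "(\<lambda>_. 0) \<in> L" using subgL unfolding subg_def by blast
    ultimately have "x \<in> ext_set L x" unfolding ext_set_def by blast
    thus ?thesis using th(2) th'(3) by simp
  qed
  ultimately show ?thesis using th(1) c(2) by blast
qed

theorem lemma5p9:
  fixes p r n :: nat and L :: "(nat \<Rightarrow> int) set"
  assumes "prime p" and "r > 0" and "card (UNIV :: ('f::{field,finite}) set) = p ^ r"
    and "sublattice n L" and "finite (cosets n L)"
  shows "characteristic TYPE('f alg_closure) n L \<longleftrightarrow> coprime (lat_index n L) p"
proof -
  have pos: "CHAR('f) > 0" by (rule finite_imp_CHAR_pos) simp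
  have pr: "prime CHAR('f)" using prime_CHAR_semidom[OF pos] .
  have "CHAR('f) dvd p ^ r" using CHAR_dvd_CARD[where 'a='f] assms(3) by simp
  hence "CHAR('f) dvd p" using prime_dvd_power pr by blast
  hence CF: "CHAR('f) = p" using primes_dvd_imp_eq pr assms(1) by blast
  have CH: "CHAR('f alg_closure) = p" using CF by simp
  have Lsub: "L \<subseteq> lat n" using assms(4) unfolding sublattice_def by blast
  have sl: "subg (lat n)" unfolding subg_def lat_def vadd_def by auto
  show ?thesis
  proof
    assume "characteristic TYPE('f alg_closure) n L"
    then obtain m and \<theta>s :: "nat \<Rightarrow> (nat \<Rightarrow> int) \<Rightarrow> 'f alg_closure"
      where th: "\<forall>i<m. lat_hom n (\<theta>s i)" "L = {x\<in>lat n. \<forall>i<m. \<theta>s i x = 1}"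
      unfolding characteristic_def by blast
    show "coprime (lat_index n L) p"
    proof (rule ccontr)
      assume "\<not> coprime (lat_index n L) p"
      hence "p dvd lat_index n L" using prime_imp_coprime[OF assms(1)] coprime_commute by blast
      then obtain x where x: "x \<in> lat n" "x \<notin> L" "smul (int p) x \<in> L"
        using key2[OF assms(4,5,1)] by blast
      have "\<forall>i<m. \<theta>s i x = 1"
      proof (intro allI impI)
        fix i assume i: "i < m"
        have h: "hom_on (lat n) (\<theta>s i)" using th(1) i unfolding lat_hom_def hom_on_def by blast
        have "smul (int p) x \<in> {x\<in>lat n. \<forall>i<m. \<theta>s i x = 1}" using x(3) th(2) by simp
        hence "\<theta>s i (smul (int p) x) = 1" using i by blast
        hence "\<theta>s i x ^ p = 1" using hom_smul_nat[OF sl h x(1)] by simp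
        thus "\<theta>s i x = 1" using frob_one[OF CH assms(1)] by blast
      qed
      hence "x \<in> {x\<in>lat n. \<forall>i<m. \<theta>s i x = 1}" using x(1) by blast
      hence "x \<in> L" using th(2) by simp
      thus False using x(2) by blast
    qed
  next
    assume cop: "coprime (lat_index n L) p"
    have nd: "\<not> CHAR('f alg_closure) dvd lat_index n L"
    proof
      assume "CHAR('f alg_closure) dvd lat_index n L"
      hence "p dvd lat_index n L" using CH by simp
      hence "is_unit p" using coprime_common_divisor[OF cop] by simp
      thus False using not_prime_unit assms(1) by blast
    qed
    define D where "D = cosets n L - {L}"
    have "\<forall>C\<in>D. \<exists>\<theta>::(nat\<Rightarrow>int)\<Rightarrow>'f alg_closure. lat_hom n \<theta> \<and> (\<forall>y\<in>L. \<theta> y = 1) \<and> (\<forall>y\<in>C. \<theta> y \<noteq> 1)"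
    proof
      fix C assume C: "C \<in> D"
      then obtain x where x: "x \<in> lat n" "C = vadd x ` L" unfolding D_def cosets_def by blast
      have xL: "x \<notin> L"
      proof
        assume "x \<in> L"
        hence "L #>\<^bsub>G0 n\<^esub> x = L"
          using group.coset_join2[OF group_G0[of n], of x L] subgroup_L[OF assms(4)] x(1) by simp
        hence "C = L" using x(2) rcos_G0[OF Lsub] by simp
        thus False using C unfolding D_def by blast
      qed
      obtain \<theta> :: "(nat\<Rightarrow>int)\<Rightarrow>'f alg_closure" where th: "hom_on (lat n) \<theta>" "\<forall>y\<in>L. \<theta> y = 1" "\<theta> x \<noteq> 1"
        using sep[OF assms(4,5) nd x(1) xL] by blast
      have "\<forall>y\<in>C. \<theta> y \<noteq> 1"
      proof
        fix y assume "y \<in> C"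
        then obtain l where l: "l \<in> L" "y = vadd x l" using x(2) by blast
        have "l \<in> lat n" using l(1) Lsub by blast
        hence "\<theta> y = \<theta> x * \<theta> l" using th(1) x(1) l(2) unfolding hom_on_def by blast
        also have "\<dots> = \<theta> x" using th(2) l(1) by simp
        finally show "\<theta> y \<noteq> 1" using th(3) by simp
      qed
      moreover have "lat_hom n \<theta>" using th(1) unfolding lat_hom_def hom_on_def by blast
      ultimately show "\<exists>\<theta>::(nat\<Rightarrow>int)\<Rightarrow>'f alg_closure. lat_hom n \<theta> \<and> (\<forall>y\<in>L. \<theta> y = 1) \<and> (\<forall>y\<in>C. \<theta> y \<noteq> 1)"
        using th(2) by blast
    qed
    from bchoice[OF this] obtain \<Theta> :: "(nat \<Rightarrow> int) set \<Rightarrow> (nat\<Rightarrow>int)\<Rightarrow>'f alg_closure"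
      where Th: "\<forall>C\<in>D. lat_hom n (\<Theta> C) \<and> (\<forall>y\<in>L. \<Theta> C y = 1) \<and> (\<forall>y\<in>C. \<Theta> C y \<noteq> 1)" by blast
    have finD: "finite D" using assms(5) unfolding D_def by simp
    obtain f where f: "bij_betw f {0..<card D} D" using ex_bij_betw_nat_finite[OF finD] by blast
    define \<theta>s where "\<theta>s i = \<Theta> (f i)" for i
    have fD: "f i \<in> D" if "i < card D" for i using f that unfolding bij_betw_def by auto
    have homs: "\<forall>i<card D. lat_hom n (\<theta>s i)" using fD Th unfolding \<theta>s_def by blast
    have "L = {x\<in>lat n. \<forall>i<card D. \<theta>s i x = 1}"
    proof
      show "L \<subseteq> {x\<in>lat n. \<forall>i<card D. \<theta>s i x = 1}"
        using Lsub fD Th unfolding \<theta>s_def by blast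
    next
      show "{x\<in>lat n. \<forall>i<card D. \<theta>s i x = 1} \<subseteq> L"
      proof
        fix y assume y: "y \<in> {x\<in>lat n. \<forall>i<card D. \<theta>s i x = 1}"
        show "y \<in> L"
        proof (rule ccontr)
          assume yL: "y \<notin> L"
          define C where "C = vadd y ` L"
          have z: "(\<lambda>_. 0) \<in> L" using assms(4) unfolding sublattice_def by blast
          have "vadd y (\<lambda>_. 0) = y" by (simp add: vadd_def)
          hence yC: "y \<in> C" unfolding C_def using z by (metis image_eqI)
          have "C \<in> cosets n L" unfolding C_def cosets_def using y by blast
          moreover have "C \<noteq> L" using yC yL by blast
          ultimately have "C \<in> D" unfolding D_def by blast
          then obtain i where i: "i < card D" "f i = C"
            using f unfolding bij_betw_def by (metis atLeastLessThan_iff imageE)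
          have "\<theta>s i y \<noteq> 1" using Th \<open>C \<in> D\<close> yC i(2) unfolding \<theta>s_def by blast
          moreover have "\<theta>s i y = 1" using y i(1) by blast
          ultimately show False by blast
        qed
      qed
    qed
    thus "characteristic TYPE('f alg_closure) n L"
      unfolding characteristic_def using homs by blast
  qed
qed

end
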